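(* Under the model below, for all times $t\ge 0$ and every user $k$, $$W_k(0,t) - \hat W_k(0,t) \le (2M-1)L.$$
   Context: Model. There are $K$ users (sessions) with separate FIFO queues, and $N$ servers (subcarriers), each transmitting $r$ bits per unit time, so the total service rate is $Nr$. All packets have the same length $L$ bits. Transmissions are error free. The same packet arrival sequence is fed to two systems, starting empty at time $0$. GPS (generalized processor sharing): a fluid system of total rate $Nr$; each user $k$ has a weight $\phi_k>0$, and at every instant each backlogged user $k$ is served at rate $Nr\,\phi_k/\sum_{j\in B}\phi_j$, where $B$ is the set of currently backlogged users. MPGPS (multi-server packetized GPS) with parameter $M\ge 1$: it is work conserving (servers are never idle while packets are queued). Whenever the servers become idle at a time $\tau$, among all packets queued at $\tau$ it selects the $\min\big(M,\sum_{k}\hat Q_k(\tau)\big)$ packets that would be the first to complete service in the corresponding GPS system if no further packets arrived after $\tau$ ($\hat Q_k(\tau)$ is the number of user-$k$ packets queued under MPGPS at $\tau$). These selected packets form one batch; a batch of $M_h$ packets is transmitted jointly over all $N$ servers at aggregate rate $Nr$, occupying the servers for $M_hL/(Nr)$ time units. $W_k(t_1,t_2)$ (resp. $\hat W_k(t_1,t_2)$) denotes the number of bits of user $k$ served during $(t_1,t_2)$ under GPS (resp. MPGPS). *)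

theory Defs
  imports "HOL-Analysis.Analysis"
begin

text \<open>Packets are pairs (k, i): the i-th (0-based) packet of user k.
  P is the set of packets that ever arrive, a p their arrival times.\<close>

definition cum_arr :: "(nat \<times> nat) set \<Rightarrow> (nat \<times> nat \<Rightarrow> real) \<Rightarrow> real \<Rightarrow> nat \<Rightarrow> real \<Rightarrow> real" where
  "cum_arr P a L k t = L * real (card {i. (k, i) \<in> P \<and> a (k, i) \<le> t})"

definition gps_rate :: "nat \<Rightarrow> (nat \<Rightarrow> real) \<Rightarrow> nat \<Rightarrow> real \<Rightarrow> (nat \<Rightarrow> real \<Rightarrow> real)
    \<Rightarrow> (nat \<Rightarrow> real \<Rightarrow> real) \<Rightarrow> nat \<Rightarrow> real \<Rightarrow> real" where
  "gps_rate K \<phi> N r A W k s =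
     (if W k s < A k s
      then real N * r * \<phi> k / (\<Sum>j\<in>{j. j < K \<and> W j s < A j s}. \<phi> j)
      else 0)"

text \<open>W is the GPS (fluid) service process for arrivals A: W k t = W_k(0,t).\<close>
definition is_gps :: "nat \<Rightarrow> (nat \<Rightarrow> real) \<Rightarrow> nat \<Rightarrow> real \<Rightarrow> (nat \<Rightarrow> real \<Rightarrow> real)
    \<Rightarrow> (nat \<Rightarrow> real \<Rightarrow> real) \<Rightarrow> bool" where
  "is_gps K \<phi> N r A W \<longleftrightarrow>
     (\<forall>k<K. \<forall>t\<ge>0. (gps_rate K \<phi> N r A W k has_integral W k t) {0..t})"

definition gps_finish :: "(nat \<Rightarrow> real \<Rightarrow> real) \<Rightarrow> real \<Rightarrow> nat \<times> nat \<Rightarrow> real" where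
  "gps_finish W L p = Inf {t. 0 \<le> t \<and> real (Suc (snd p)) * L \<le> W (fst p) t}"

definition batch_end :: "real \<Rightarrow> nat \<Rightarrow> real \<Rightarrow> (nat \<Rightarrow> real) \<Rightarrow> (nat \<Rightarrow> (nat \<times> nat) set) \<Rightarrow> nat \<Rightarrow> real" where
  "batch_end L N r s S h = s h + real (card (S h)) * L / (real N * r)"

definition served_before :: "(nat \<Rightarrow> (nat \<times> nat) set) \<Rightarrow> nat \<Rightarrow> (nat \<times> nat) set" where
  "served_before S h = (\<Union>h'<h. S h')"

definition queued_at :: "(nat \<times> nat) set \<Rightarrow> (nat \<times> nat \<Rightarrow> real) \<Rightarrow> (nat \<Rightarrow> real)
    \<Rightarrow> (nat \<Rightarrow> (nat \<times> nat) set) \<Rightarrow> nat \<Rightarrow> (nat \<times> nat) set" where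
  "queued_at P a s S h = {p \<in> P. a p \<le> s h} - served_before S h"

text \<open>The MPGPS schedule: batches h < nb (nb possibly infinite), batch h starts at s h
  and consists of the packet set S h.  Wt \<tau> is the GPS service process when no
  packets arrive after \<tau> (arrivals at \<tau> included).\<close>
definition is_mpgps :: "(nat \<times> nat) set \<Rightarrow> (nat \<times> nat \<Rightarrow> real) \<Rightarrow> real \<Rightarrow> nat \<Rightarrow> real \<Rightarrow> nat
    \<Rightarrow> (real \<Rightarrow> nat \<Rightarrow> real \<Rightarrow> real) \<Rightarrow> (nat \<Rightarrow> real) \<Rightarrow> (nat \<Rightarrow> (nat \<times> nat) set) \<Rightarrow> enat \<Rightarrow> bool" where
  "is_mpgps P a L N r M Wt s S nb \<longleftrightarrow>
     (\<forall>h. enat h < nb \<longrightarrow>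
        S h \<noteq> {} \<and>
        S h \<subseteq> queued_at P a s S h \<and>
        card (S h) = min M (card (queued_at P a s S h)) \<and>
        (\<forall>p\<in>S h. \<forall>q\<in>queued_at P a s S h - S h.
            gps_finish (Wt (s h)) L p \<le> gps_finish (Wt (s h)) L q) \<and>
        s h = max (if h = 0 then 0 else batch_end L N r s S (h - 1))
                  (Inf (a ` (P - served_before S h)))) \<and>
     (\<forall>n. nb = enat n \<longrightarrow> served_before S n = P)"

text \<open>MPGPS service of user k in (0, t): each packet of a batch of size m is
  served at rate N r / m during the batch.\<close>
definition mpgps_served :: "real \<Rightarrow> nat \<Rightarrow> real \<Rightarrow> (nat \<Rightarrow> real) \<Rightarrow> (nat \<Rightarrow> (nat \<times> nat) set)
    \<Rightarrow> enat \<Rightarrow> nat \<Rightarrow> real \<Rightarrow> real" where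
  "mpgps_served L N r s S nb k t =
     (\<Sum>(h, p)\<in>{(h, p). enat h < nb \<and> p \<in> S h \<and> fst p = k \<and> s h < t}.
        min L (max 0 ((t - s h) * (real N * r) / real (card (S h)))))"

end

theory Submission
  imports Defs
begin

lemma aux_cancel4: "0 < (x::real) \<Longrightarrow> x * (y / (4 * x)) = y / 4" by simp

locale gps_sys =
  fixes K :: nat and \<phi> :: "nat \<Rightarrow> real" and N :: nat and r :: real
    and A W :: "nat \<Rightarrow> real \<Rightarrow> real"
  assumes phi_pos: "\<And>k. k < K \<Longrightarrow> \<phi> k > 0"
    and R_pos: "real N * r > 0"
    and A_mono: "\<And>k s t. k < K \<Longrightarrow> 0 \<le> s \<Longrightarrow> s \<le> t \<Longrightarrow> A k s \<le> A k t"
    and A_nonneg: "\<And>k t. k < K \<Longrightarrow> 0 \<le> t \<Longrightarrow> 0 \<le> A k t"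
    and A_rc: "\<And>s. 0 \<le> s \<Longrightarrow> \<exists>\<delta>>0. \<forall>u. s \<le> u \<and> u < s + \<delta> \<longrightarrow> (\<forall>k<K. A k u = A k s)"
    and gps: "is_gps K \<phi> N r A W"
begin

abbreviation "R \<equiv> real N * r"
abbreviation "rate \<equiv> gps_rate K \<phi> N r A W"
abbreviation "Bl s \<equiv> {j. j < K \<and> W j s < A j s}"

lemma sumB_pos:
  assumes "k < K" "W k s < A k s"
  shows "(\<Sum>j\<in>Bl s. \<phi> j) \<ge> \<phi> k" "(\<Sum>j\<in>Bl s. \<phi> j) > 0"
proof -
  have "(\<Sum>j\<in>{k}. \<phi> j) \<le> (\<Sum>j\<in>Bl s. \<phi> j)"
    by (rule sum_mono2) (use assms phi_pos in \<open>auto intro: less_imp_le\<close>)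
  then show "(\<Sum>j\<in>Bl s. \<phi> j) \<ge> \<phi> k" by simp
  then show "(\<Sum>j\<in>Bl s. \<phi> j) > 0" using phi_pos[OF assms(1)] by linarith
qed

lemma rate_nonneg: "k < K \<Longrightarrow> 0 \<le> rate k s"
  unfolding gps_rate_def using sumB_pos phi_pos R_pos
  by (auto intro!: divide_nonneg_pos mult_nonneg_nonneg less_imp_le)

lemma rate_le: assumes "k < K" shows "rate k s \<le> R"
proof (cases "W k s < A k s")
  case True
  have "R * \<phi> k / (\<Sum>j\<in>Bl s. \<phi> j) \<le> R"
    using sumB_pos[OF assms True] R_pos phi_pos[OF assms]
    by (simp add: divide_le_eq mult_left_mono)
  then show ?thesis using True unfolding gps_rate_def by simp
next
  case False
  then show ?thesis unfolding gps_rate_def using R_pos by simp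
qed

lemma rate_sum: "(\<Sum>k<K. rate k s) = (if Bl s = {} then 0 else R)"
proof -
  have "(\<Sum>k<K. rate k s) = (\<Sum>k\<in>Bl s. R * \<phi> k / (\<Sum>j\<in>Bl s. \<phi> j))"
    unfolding gps_rate_def by (rule sum.mono_neutral_cong_right) auto
  also have "\<dots> = R * (\<Sum>k\<in>Bl s. \<phi> k) / (\<Sum>j\<in>Bl s. \<phi> j)"
    by (simp add: sum_divide_distrib[symmetric] sum_distrib_left)
  also have "\<dots> = (if Bl s = {} then 0 else R)"
  proof (cases "Bl s = {}")
    case False
    then obtain k where "k \<in> Bl s" by blast
    then have "(\<Sum>j\<in>Bl s. \<phi> j) > 0" using sumB_pos[of k s] by auto
    then have "R * (\<Sum>k\<in>Bl s. \<phi> k) / (\<Sum>j\<in>Bl s. \<phi> j) = R" by simp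
    then show ?thesis using False by (subst if_not_P) auto
  next
    case True
    show ?thesis by (simp only: True sum.empty) simp
  qed
  finally show ?thesis .
qed

lemma rate_ratio:
  assumes "k0 < K" "k1 < K" "W k0 s < A k0 s"
  shows "rate k1 s * \<phi> k0 \<le> rate k0 s * \<phi> k1"
proof -
  have pos: "(\<Sum>j\<in>Bl s. \<phi> j) > 0" using sumB_pos[OF assms(1,3)] by auto
  show ?thesis
  proof (cases "W k1 s < A k1 s")
    case True
    then show ?thesis using assms unfolding gps_rate_def by (simp add: field_simps)
  next
    case False
    then show ?thesis using assms pos phi_pos R_pos unfolding gps_rate_def
      by (auto intro!: mult_nonneg_nonneg divide_nonneg_pos less_imp_le)
  qed
qed

lemma incr:
  assumes "k < K" "0 \<le> v" "v \<le> u"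
  shows "(rate k has_integral (W k u - W k v)) {v..u}"
proof -
  have hu: "(rate k has_integral W k u) {0..u}" and hv: "(rate k has_integral W k v) {0..v}"
    using gps assms unfolding is_gps_def by auto
  have "rate k integrable_on {v..u}"
    using integrable_subinterval_real[OF has_integral_integrable[OF hu]] assms by auto
  then have hvu: "(rate k has_integral integral {v..u} (rate k)) {v..u}"
    by (simp add: has_integral_integral)
  have "(rate k has_integral (W k v + integral {v..u} (rate k))) {0..u}"
    by (rule has_integral_combine[OF assms(2,3) hv hvu])
  then have "W k v + integral {v..u} (rate k) = W k u"
    using hu has_integral_unique by blast
  then show ?thesis using hvu by (metis add_diff_cancel_left')
qed

lemma W0: "k < K \<Longrightarrow> W k 0 = 0"
proof -
  assume k: "k < K"
  have "(rate k has_integral W k 0) {0..0}" using gps k unfolding is_gps_def by blast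
  then have "(rate k has_integral W k 0) {0}" by simp
  moreover have "(rate k has_integral 0) {0}" by (rule has_integral_refl(2))
  ultimately show ?thesis using has_integral_unique by blast
qed

lemma W_bounds:
  assumes "k < K" "0 \<le> v" "v \<le> u"
  shows "0 \<le> W k u - W k v" "W k u - W k v \<le> R * (u - v)"
proof -
  have c: "((\<lambda>x. R) has_integral R * (u - v)) {v..u}"
    using has_integral_const_real[of R v u] assms by (simp add: mult.commute)
  have z: "((\<lambda>x. 0::real) has_integral 0) {v..u}" by simp
  show "0 \<le> W k u - W k v"
    by (rule has_integral_le[OF z incr[OF assms]]) (use rate_nonneg assms in auto)
  show "W k u - W k v \<le> R * (u - v)"
    by (rule has_integral_le[OF incr[OF assms] c]) (use rate_le assms in auto)
qed

lemma W_mono: "k < K \<Longrightarrow> 0 \<le> v \<Longrightarrow> v \<le> u \<Longrightarrow> W k v \<le> W k u"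
  using W_bounds by fastforce

lemma W_nonneg: "k < K \<Longrightarrow> 0 \<le> u \<Longrightarrow> 0 \<le> W k u"
  using W_mono[of k 0 u] W0 by auto

lemma sum_incr:
  assumes "0 \<le> v" "v \<le> u"
  shows "((\<lambda>s. \<Sum>k<K. rate k s) has_integral (\<Sum>k<K. W k u - W k v)) {v..u}"
  by (rule has_integral_sum) (use incr assms in auto)

lemma sum_bound:
  assumes "0 \<le> v" "v \<le> u"
  shows "(\<Sum>k<K. W k u - W k v) \<le> R * (u - v)"
proof -
  have c: "((\<lambda>x. R) has_integral R * (u - v)) {v..u}"
    using has_integral_const_real[of R v u] assms by (simp add: mult.commute)
  show ?thesis
    by (rule has_integral_le[OF sum_incr[OF assms] c]) (use rate_sum R_pos in auto)
qed

lemma sum_busy: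
  assumes "0 \<le> v" "v \<le> u" "\<And>s. v \<le> s \<Longrightarrow> s \<le> u \<Longrightarrow> Bl s \<noteq> {}"
  shows "(\<Sum>k<K. W k u - W k v) \<ge> R * (u - v)"
proof -
  have c: "((\<lambda>x. R) has_integral R * (u - v)) {v..u}"
    using has_integral_const_real[of R v u] assms by (simp add: mult.commute)
  show ?thesis
    by (rule has_integral_le[OF c sum_incr[OF assms(1,2)]]) (use rate_sum assms(3) in auto)
qed

lemma W_cont: "k < K \<Longrightarrow> continuous_on {0..} (W k)"
proof -
  assume k: "k < K"
  show ?thesis
  proof (rule continuous_on_iff[THEN iffD2], intro ballI allI impI)
    fix x e :: real assume x: "x \<in> {0..}" and e: "0 < e"
    show "\<exists>d>0. \<forall>x'\<in>{0..}. dist x' x < d \<longrightarrow> dist (W k x') (W k x) < e"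
    proof (intro exI[of _ "e / R"] conjI ballI impI)
      show "0 < e / R" using e R_pos by simp
      fix y :: real assume y: "y \<in> {0..}" and d: "dist y x < e / R"
      have "\<bar>W k y - W k x\<bar> \<le> R * \<bar>y - x\<bar>"
      proof (cases "x \<le> y")
        case True then show ?thesis using W_bounds[OF k _ True] x by auto
      next
        case False then show ?thesis using W_bounds[OF k _, of y x] y by auto
      qed
      also have "\<dots> < e" using d R_pos by (simp add: dist_real_def field_simps)
      finally show "dist (W k y) (W k x) < e" by (simp add: dist_real_def)
    qed
  qed
qed

lemma closed_level:
  assumes "k < K" "0 \<le> a"
  shows "closed ({a..b} \<inter> W k -` {c..})" "closed ({a..} \<inter> W k -` {c..})"
proof -
  have "continuous_on {a..b} (W k)" "continuous_on {a..} (W k)"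
    using W_cont[OF assms(1)] assms(2) by (auto elim!: continuous_on_subset)
  then show "closed ({a..b} \<inter> W k -` {c..})" "closed ({a..} \<inter> W k -` {c..})"
    by (auto intro!: continuous_closed_preimage)
qed

lemma closed_level_le:
  assumes "k < K" "0 \<le> a"
  shows "closed ({a..b} \<inter> W k -` {..c})"
proof -
  have "continuous_on {a..b} (W k)"
    using W_cont[OF assms(1)] assms(2) by (auto elim!: continuous_on_subset)
  then show ?thesis by (auto intro!: continuous_closed_preimage)
qed

lemma W_le_A:
  assumes k: "k < K" and t: "0 \<le> t"
  shows "W k t \<le> A k t"
proof (rule ccontr)
  assume "\<not> W k t \<le> A k t"
  then have gt: "W k t > A k t" by simp
  define c where "c = A k t"
  define Z where "Z = {0..t} \<inter> W k -` {..c}"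
  have "0 \<in> Z" unfolding Z_def c_def using W0[OF k] A_nonneg[OF k t] t by auto
  then have ne: "Z \<noteq> {}" by auto
  have bdd: "bdd_above Z" unfolding Z_def by (auto intro: bdd_aboveI[of _ t])
  have cl: "closed Z" unfolding Z_def by (rule closed_level_le[OF k]) simp
  define v where "v = Sup Z"
  have vZ: "v \<in> Z" unfolding v_def by (rule closed_contains_Sup[OF ne bdd cl])
  then have v: "0 \<le> v" "v \<le> t" "W k v \<le> c" unfolding Z_def by auto
  have zero: "rate k s = 0" if "s \<in> {v..t} - {v}" for s
  proof -
    have s: "v < s" "s \<le> t" using that by auto
    have "s \<notin> Z" using s cSup_upper[OF _ bdd, of s] unfolding v_def by auto
    then have "W k s > c" using s v unfolding Z_def by auto
    moreover have "A k s \<le> c" unfolding c_def using A_mono[OF k _ s(2)] s v by auto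
    ultimately show ?thesis unfolding gps_rate_def by auto
  qed
  have "((\<lambda>s. 0) has_integral (W k t - W k v)) {v..t}"
    by (rule has_integral_spike_finite[OF _ _ incr[OF k v(1) v(2)], of "{v}"]) (use zero in auto)
  then have "W k t = W k v" by simp
  then show False using gt v unfolding c_def by simp
qed

lemma local_linear:
  assumes s: "0 \<le> s"
  shows "\<exists>\<delta>>0. \<forall>u. s \<le> u \<and> u < s + \<delta> \<longrightarrow> (\<forall>k<K. W k u = W k s + rate k s * (u - s))"
proof -
  obtain \<delta>1 where d1: "\<delta>1 > 0" "\<And>u. s \<le> u \<Longrightarrow> u < s + \<delta>1 \<Longrightarrow> \<forall>k<K. A k u = A k s"
    using A_rc[OF s] by blast
  define \<delta>2 where "\<delta>2 = Min (insert 1 ((\<lambda>k. (A k s - W k s) / R) ` Bl s))"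
  have fin: "finite (insert 1 ((\<lambda>k. (A k s - W k s) / R) ` Bl s))" by auto
  have d2: "\<delta>2 > 0" unfolding \<delta>2_def using R_pos
    by (subst Min_gr_iff[OF fin]) (auto intro!: divide_pos_pos)
  have d2le: "\<delta>2 \<le> (A k s - W k s) / R" if "k \<in> Bl s" for k
    unfolding \<delta>2_def using that fin by (auto intro!: Min_le)
  define \<delta> where "\<delta> = min \<delta>1 \<delta>2"
  have Bleq: "Bl u = Bl s" if u: "s \<le> u" "u < s + \<delta>" for u
  proof -
    have Au: "\<forall>k<K. A k u = A k s" using d1(2)[of u] u unfolding \<delta>_def by auto
    show ?thesis
    proof (intro set_eqI iffI)
      fix k assume "k \<in> Bl u"
      then have k: "k < K" "W k u < A k u" by auto
      then have "W k s < A k s" using W_mono[OF k(1) s u(1)] Au by auto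
      then show "k \<in> Bl s" using k by auto
    next
      fix k assume kB: "k \<in> Bl s"
      then have k: "k < K" by auto
      have "W k u - W k s \<le> R * (u - s)" using W_bounds[OF k s u(1)] by auto
      also have "\<dots> < R * \<delta>2" using u R_pos unfolding \<delta>_def by (auto intro!: mult_strict_left_mono)
      also have "\<dots> \<le> A k s - W k s" using d2le[OF kB] R_pos by (simp add: field_simps)
      finally show "k \<in> Bl u" using Au k by auto
    qed
  qed
  have rate_eq: "rate k u = rate k s" if "s \<le> u" "u < s + \<delta>" "k < K" for k u
  proof -
    have b: "Bl u = Bl s" by (rule Bleq[OF that(1,2)])
    have "(k \<in> Bl u) = (k \<in> Bl s)" by (simp only: b)
    then have e: "(W k u < A k u) = (W k s < A k s)" using that(3) by simp
    show ?thesis unfolding gps_rate_def by (simp only: e b)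
  qed
  show ?thesis
  proof (intro exI[of _ \<delta>] conjI allI impI)
    show "\<delta> > 0" unfolding \<delta>_def using d1 d2 by simp
    fix u k assume u: "s \<le> u \<and> u < s + \<delta>" and k: "k < K"
    have "((\<lambda>x. rate k s) has_integral (Henstock_Kurzweil_Integration.content {s..u} *\<^sub>R rate k s)) {s..u}"
      by (rule has_integral_const_real)
    then have h1: "((\<lambda>x. rate k s) has_integral (rate k s * (u - s))) {s..u}" using u by (simp add: mult.commute)
    have h2: "((\<lambda>x. rate k s) has_integral (W k u - W k s)) {s..u}"
    proof (rule has_integral_eq[OF _ incr[OF k s]])
      fix x assume "x \<in> {s..u}"
      then show "rate k x = rate k s" using u k by (intro rate_eq) auto
    qed (use u in auto)
    show "W k u = W k s + rate k s * (u - s)" using has_integral_unique[OF h1 h2] by simp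
  qed
qed

lemma ratio:
  assumes k: "k0 < K" "k1 < K" and uv: "0 \<le> u" "u \<le> v"
    and bl: "\<And>s. u \<le> s \<Longrightarrow> s < v \<Longrightarrow> W k0 s < A k0 s"
  shows "(W k1 v - W k1 u) * \<phi> k0 \<le> (W k0 v - W k0 u) * \<phi> k1"
proof -
  have h1: "((\<lambda>x. rate k1 x * \<phi> k0) has_integral ((W k1 v - W k1 u) * \<phi> k0)) {u..v}"
    by (rule has_integral_mult_left[OF incr[OF k(2) uv]])
  have h0: "((\<lambda>x. rate k0 x * \<phi> k1) has_integral ((W k0 v - W k0 u) * \<phi> k1)) {u..v}"
    by (rule has_integral_mult_left[OF incr[OF k(1) uv]])
  have g1: "((\<lambda>x. if x = v then 0 else rate k1 x * \<phi> k0) has_integral ((W k1 v - W k1 u) * \<phi> k0)) {u..v}"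
    by (rule has_integral_spike_finite[OF _ _ h1, of "{v}"]) auto
  have g0: "((\<lambda>x. if x = v then 0 else rate k0 x * \<phi> k1) has_integral ((W k0 v - W k0 u) * \<phi> k1)) {u..v}"
    by (rule has_integral_spike_finite[OF _ _ h0, of "{v}"]) auto
  show ?thesis
    by (rule has_integral_le[OF g1 g0]) (use rate_ratio[OF k] bl in auto)
qed

lemma first_hit:
  assumes k: "k < K" and u: "0 \<le> u" "W k u < c" and t: "u \<le> t" "c \<le> W k t"
  shows "\<exists>T. u \<le> T \<and> T \<le> t \<and> c \<le> W k T \<and> (\<forall>s. u \<le> s \<and> s < T \<longrightarrow> W k s < c)"
proof -
  define Z where "Z = {u..t} \<inter> W k -` {c..}"
  have ne: "Z \<noteq> {}" using t unfolding Z_def by auto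
  have bdd: "bdd_below Z" unfolding Z_def by (auto intro: bdd_belowI[of _ u])
  have cl: "closed Z" unfolding Z_def by (rule closed_level[OF k u(1)])
  define T where "T = Inf Z"
  have TZ: "T \<in> Z" unfolding T_def by (rule closed_contains_Inf[OF ne bdd cl])
  show ?thesis
  proof (intro exI[of _ T] conjI allI impI)
    show "u \<le> T" "T \<le> t" "c \<le> W k T" using TZ unfolding Z_def by auto
    fix s assume s: "u \<le> s \<and> s < T"
    then have "s \<notin> Z" using cInf_lower[OF _ bdd, of s] unfolding T_def by force
    then show "W k s < c" using s \<open>T \<le> t\<close> unfolding Z_def by auto
  qed
qed

lemma W_ivt:
  assumes k: "k < K" and u: "0 \<le> u" "u \<le> t" and c: "W k u \<le> c" "c \<le> W k t"
  shows "\<exists>T. u \<le> T \<and> T \<le> t \<and> W k T = c"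
proof -
  have "continuous_on {u..t} (W k)"
    using W_cont[OF k] u by (auto elim!: continuous_on_subset)
  then show ?thesis using IVT'[of "W k" u c t] c u by auto
qed

lemma first_hit_eq:
  assumes k: "k < K" and u: "0 \<le> u" "W k u < c" and t: "u \<le> t" "c \<le> W k t"
  shows "\<exists>T. u \<le> T \<and> T \<le> t \<and> W k T = c \<and> (\<forall>s. u \<le> s \<and> s < T \<longrightarrow> W k s < c)"
proof -
  obtain T where T: "u \<le> T" "T \<le> t" "c \<le> W k T" "\<forall>s. u \<le> s \<and> s < T \<longrightarrow> W k s < c"
    using first_hit[OF assms] by blast
  obtain x where x: "u \<le> x" "x \<le> T" "W k x = c"
    using W_ivt[OF k u(1) T(1) less_imp_le[OF u(2)] T(3)] by blast
  have "x = T" using T(4) x by force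
  then show ?thesis using T x by blast
qed

lemma finish_attained:
  assumes k: "k < K" and ne: "{t. 0 \<le> t \<and> c \<le> W k t} \<noteq> {}"
  shows "Inf {t. 0 \<le> t \<and> c \<le> W k t} \<in> {t. 0 \<le> t \<and> c \<le> W k t}"
proof -
  have eq: "{t. 0 \<le> t \<and> c \<le> W k t} = {0..} \<inter> W k -` {c..}" by auto
  show ?thesis unfolding eq
    by (rule closed_contains_Inf) (use ne eq closed_level[OF k, of 0] in \<open>auto intro: bdd_belowI[of _ 0]\<close>)
qed

lemma finish_lt:
  assumes k: "k < K" and ne: "{t. 0 \<le> t \<and> c \<le> W k t} \<noteq> {}"
    and T: "0 \<le> T" "W k T < c"
  shows "T < Inf {t. 0 \<le> t \<and> c \<le> W k t}"
proof -
  let ?F = "Inf {t. 0 \<le> t \<and> c \<le> W k t}"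
  have "?F \<in> {t. 0 \<le> t \<and> c \<le> W k t}" by (rule finish_attained[OF k ne])
  then have F: "0 \<le> ?F" "c \<le> W k ?F" by auto
  show ?thesis
  proof (rule ccontr)
    assume "\<not> T < ?F"
    then have "W k ?F \<le> W k T" using W_mono[OF k F(1)] by simp
    then show False using F T by simp
  qed
qed

lemma finish_le:
  assumes "0 \<le> T" "c \<le> W k T"
  shows "Inf {t. 0 \<le> t \<and> c \<le> W k t} \<le> T"
  by (rule cInf_lower) (use assms in \<open>auto intro: bdd_belowI[of _ 0]\<close>)

lemma liveness:
  assumes tau: "0 \<le> \<tau>" and noarr: "\<And>t k. \<tau> \<le> t \<Longrightarrow> k < K \<Longrightarrow> A k t = A k \<tau>"
    and k: "k < K" and c: "c \<le> A k \<tau>"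
  shows "\<exists>t\<ge>\<tau>. c \<le> W k t"
proof (rule ccontr)
  assume na: "\<not> (\<exists>t\<ge>\<tau>. c \<le> W k t)"
  have lt: "W k t < A k t" if "\<tau> \<le> t" for t
  proof -
    have "W k t < c" using na that by auto
    then show ?thesis using c noarr[OF that k] by linarith
  qed
  define S where "S = (\<Sum>j<K. A j \<tau>)"
  define t where "t = \<tau> + S / R + 1"
  have S0: "0 \<le> S" unfolding S_def using A_nonneg tau by (auto intro: sum_nonneg)
  have tt: "\<tau> \<le> t" unfolding t_def using S0 R_pos by auto
  have "R * (t - \<tau>) \<le> (\<Sum>j<K. W j t - W j \<tau>)"
    by (rule sum_busy[OF tau tt]) (use lt k in auto)
  also have "\<dots> \<le> (\<Sum>j<K. A j \<tau>)"
  proof (rule sum_mono)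
    fix j assume "j \<in> {..<K}"
    then have j: "j < K" by auto
    show "W j t - W j \<tau> \<le> A j \<tau>"
      using W_le_A[OF j, of t] W_nonneg[OF j tau] noarr[OF tt j] tt tau by auto
  qed
  finally have "R * (t - \<tau>) \<le> S" unfolding S_def .
  moreover have "R * (t - \<tau>) = R * (S / R) + R" unfolding t_def by (simp add: algebra_simps)
  moreover have gen: "\<And>x y::real. 0 < x \<Longrightarrow> x * (y / x) = y" by simp
  have "R * (S / R) = S" by (rule gen[OF R_pos])
  ultimately show False using R_pos by linarith
qed

end

lemma gps_unique:
  assumes G1: "gps_sys K \<phi> N r A W" and G2: "gps_sys K \<phi> N r A' W'" and tau: "0 \<le> \<tau>"
    and AA: "\<And>k t. k < K \<Longrightarrow> 0 \<le> t \<Longrightarrow> t \<le> \<tau> \<Longrightarrow> A' k t = A k t"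
  shows "\<And>k t. k < K \<Longrightarrow> 0 \<le> t \<Longrightarrow> t \<le> \<tau> \<Longrightarrow> W' k t = W k t"
proof (rule ccontr)
  interpret S1: gps_sys K \<phi> N r A W by (rule G1)
  interpret S2: gps_sys K \<phi> N r A' W' by (rule G2)
  fix k t assume k: "k < K" "0 \<le> t" "t \<le> \<tau>" and ne0: "W' k t \<noteq> W k t"
  define Z where "Z = {t. 0 \<le> t \<and> t \<le> \<tau> \<and> (\<exists>k<K. W' k t \<noteq> W k t)}"
  have ne: "Z \<noteq> {}" using k ne0 unfolding Z_def by auto
  have bdd: "bdd_below Z" unfolding Z_def by (auto intro: bdd_belowI[of _ 0])
  define s0 where "s0 = Inf Z"
  have tZ: "t \<in> Z" using k ne0 unfolding Z_def by auto
  have "s0 \<le> t" unfolding s0_def using cInf_lower[OF tZ bdd] .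
  moreover have "0 \<le> s0" unfolding s0_def by (rule cInf_greatest[OF ne]) (auto simp: Z_def)
  ultimately have s0: "0 \<le> s0" "s0 \<le> \<tau>" using k by auto
  have before: "W' j t = W j t" if "j < K" "0 \<le> t" "t < s0" for j t
  proof (rule ccontr)
    assume "W' j t \<noteq> W j t"
    then have "t \<in> Z" using that s0 unfolding Z_def by auto
    then have "s0 \<le> t" unfolding s0_def using cInf_lower[OF _ bdd] by auto
    then show False using that by simp
  qed
  have at: "W' j s0 = W j s0" if j: "j < K" for j
  proof (cases "s0 = 0")
    case True then show ?thesis using S1.W0[OF j] S2.W0[OF j] by simp
  next
    case False
    then have sp: "s0 > 0" using s0 by simp
    show ?thesis
    proof (rule ccontr)
      assume "W' j s0 \<noteq> W j s0"
      define d where "d = \<bar>W' j s0 - W j s0\<bar>"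
      have d: "d > 0" using \<open>W' j s0 \<noteq> W j s0\<close> unfolding d_def by simp
      define t where "t = max 0 (s0 - d / (4 * S1.R))"
      have R: "S1.R > 0" by (rule S1.R_pos)
      have t: "0 \<le> t" "t < s0" "s0 - t \<le> d / (4 * S1.R)"
        unfolding t_def using sp d R by (auto intro!: divide_pos_pos)
      have e: "W' j t = W j t" by (rule before[OF j t(1,2)])
      have b1: "\<bar>W j s0 - W j t\<bar> \<le> S1.R * (s0 - t)"
        using S1.W_bounds[OF j t(1) less_imp_le[OF t(2)]] by (auto simp: abs_if)
      have b2: "\<bar>W' j s0 - W' j t\<bar> \<le> S1.R * (s0 - t)"
        using S2.W_bounds[OF j t(1) less_imp_le[OF t(2)]] by (auto simp: abs_if)
      have "S1.R * (s0 - t) \<le> S1.R * (d / (4 * S1.R))" using t R by (intro mult_left_mono) auto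
      also have "\<dots> = d / 4" using R by (rule aux_cancel4)
      finally have "d \<le> d / 4 + d / 4" using b1 b2 e unfolding d_def by linarith
      then show False using d by simp
    qed
  qed
  obtain \<delta>1 where d1: "\<delta>1 > 0" "\<And>u. s0 \<le> u \<Longrightarrow> u < s0 + \<delta>1 \<Longrightarrow> \<forall>k<K. W k u = W k s0 + S1.rate k s0 * (u - s0)"
    using S1.local_linear[OF s0(1)] by blast
  obtain \<delta>2 where d2: "\<delta>2 > 0" "\<And>u. s0 \<le> u \<Longrightarrow> u < s0 + \<delta>2 \<Longrightarrow> \<forall>k<K. W' k u = W' k s0 + S2.rate k s0 * (u - s0)"
    using S2.local_linear[OF s0(1)] by blast
  have Bs: "{j. j < K \<and> W' j s0 < A' j s0} = {j. j < K \<and> W j s0 < A j s0}"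
    using at AA s0 by auto
  have rates: "S2.rate j s0 = S1.rate j s0" if "j < K" for j
    unfolding gps_rate_def Bs using at[OF that] AA[OF that s0] by simp
  have after: "W' j u = W j u" if "j < K" "s0 \<le> u" "u < s0 + min \<delta>1 \<delta>2" for j u
    using d1(2)[of u] d2(2)[of u] that at[OF that(1)] rates[OF that(1)] by auto
  have "s0 + min \<delta>1 \<delta>2 \<le> z" if zZ: "z \<in> Z" for z
  proof (rule ccontr)
    assume "\<not> s0 + min \<delta>1 \<delta>2 \<le> z"
    moreover have "s0 \<le> z" using zZ cInf_lower[OF _ bdd] unfolding s0_def by auto
    moreover obtain j where "j < K" "W' j z \<noteq> W j z" using zZ unfolding Z_def by auto
    ultimately show False using after by force
  qed
  then have "s0 + min \<delta>1 \<delta>2 \<le> s0" unfolding s0_def by (rule cInf_greatest[OF ne])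
  then show False using d1 d2 by simp
qed


lemma down_closed_eq:
  fixes D :: "nat set"
  assumes fin: "finite D" and dc: "\<And>i j. i \<in> D \<Longrightarrow> j < i \<Longrightarrow> j \<in> D"
  shows "D = {..<card D}"
proof (intro set_eqI iffI)
  fix i assume iD: "i \<in> D"
  have "{..i} \<subseteq> D"
  proof
    fix j assume "j \<in> {..i}"
    then have "j = i \<or> j < i" by auto
    then show "j \<in> D" using iD dc by blast
  qed
  then have "card {..i} \<le> card D" by (rule card_mono[OF fin])
  then show "i \<in> {..<card D}" by simp
next
  fix i assume i: "i \<in> {..<card D}"
  show "i \<in> D"
  proof (rule ccontr)
    assume niD: "i \<notin> D"
    have "D \<subseteq> {..<i}"
    proof
      fix x assume xD: "x \<in> D"
      show "x \<in> {..<i}"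
      proof (rule ccontr)
        assume "x \<notin> {..<i}"
        then have "i = x \<or> i < x" by auto
        then show False using xD niD dc by blast
      qed
    qed
    then have "card D \<le> i" using card_mono[of "{..<i}" D] by simp
    then show False using i by simp
  qed
qed

lemma aux_cancel2: "0 < (x::real) \<Longrightarrow> x * (y / (2 * x)) = y / 2" by simp

lemma per_user:
  fixes Y :: "nat set" and L w w0 :: real
  assumes fin: "finite Y" and Yp: "\<And>i. i \<in> Y \<Longrightarrow> n \<le> i \<and> real (Suc i) * L \<le> w"
    and n: "w0 \<le> real n * L" and ww: "w0 \<le> w" and L: "L > 0"
  shows "real (card Y) * L \<le> w - w0"
proof (cases "Y = {}")
  case True then show ?thesis using ww by simp
next
  case False
  define m where "m = Max Y"
  have mY: "m \<in> Y" unfolding m_def using Max_in[OF fin False] .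
  have sub: "Y \<subseteq> {n..m}" using Yp Max_ge[OF fin] unfolding m_def by auto
  have nm: "n \<le> m" using Yp[OF mY] by simp
  have "card Y \<le> card {n..m}" by (rule card_mono[OF _ sub]) simp
  then have "card Y \<le> Suc m - n" by simp
  then have "real (card Y) \<le> real (Suc m) - real n" using nm by linarith
  then have "real (card Y) * L \<le> (real (Suc m) - real n) * L" using L by (intro mult_right_mono) auto
  also have "\<dots> = real (Suc m) * L - real n * L" by (simp add: algebra_simps)
  also have "\<dots> \<le> w - w0" using Yp[OF mY] n by linarith
  finally show ?thesis .
qed

lemma aux_div_le: "0 < (R::real) \<Longrightarrow> x \<le> R * y \<Longrightarrow> x / R \<le> y"
  by (simp add: divide_le_eq mult.commute)

lemma aux_final:
  fixes R L n x y z e s0 :: real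
  assumes "0 < R" "0 < L" "n \<le> x + y" "x * L \<le> R * z" "e = s0 + n * L / R"
  shows "e \<le> s0 + z + y * L / R"
proof -
  have "n * L / R \<le> (x + y) * L / R" using assms by (intro divide_right_mono mult_right_mono) auto
  also have "\<dots> = x * L / R + y * L / R" by (simp add: distrib_right add_divide_distrib)
  also have "x * L / R \<le> z" using aux_div_le[OF assms(1,4)] by simp
  finally show ?thesis using assms(5) by linarith
qed

lemma aux_full:
  fixes R L m x :: real
  assumes "0 < R" "0 < m" "m * L / R \<le> x"
  shows "L \<le> x * R / m"
proof -
  have "m * L \<le> x * R" using assms by (simp add: divide_le_eq)
  then show ?thesis using assms by (simp add: le_divide_eq mult.commute)
qed

lemma aux_partial:
  fixes R L m t T d sp :: real
  assumes R: "0 < R" and L: "0 < L" and m: "1 \<le> m" and T: "t - d \<le> T" "T \<le> t"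
    and e: "sp + m * L / R \<le> T + d"
  shows "L + R * (t - T) - min L (max 0 ((t - sp) * R / m)) \<le> R * d"
proof -
  define y where "y = T + d - t"
  have y: "0 \<le> y" using T unfolding y_def by simp
  have "m * L / R \<le> t - sp + y" using e unfolding y_def by simp
  then have "m * L \<le> (t - sp + y) * R" using R by (simp add: divide_le_eq)
  then have "L \<le> (t - sp + y) * R / m" using m by (simp add: le_divide_eq mult.commute)
  also have "\<dots> = (t - sp) * R / m + y * R / m" by (simp add: distrib_right add_divide_distrib)
  also have "y * R / m \<le> y * R / 1"
    by (rule divide_left_mono) (use m y R in auto)
  finally have x: "L - y * R \<le> (t - sp) * R / m" by simp
  have "L - y * R \<le> min L (max 0 ((t - sp) * R / m))" using x y R by auto
  moreover have "R * d = R * (t - T) + y * R" unfolding y_def by (simp add: algebra_simps)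
  ultimately show ?thesis by linarith
qed

lemma aux_nopartial:
  fixes R L m t T d sp :: real
  assumes R: "0 < R" and L: "0 < L" and m: "1 \<le> m" and ts: "t \<le> sp"
    and e: "sp + m * L / R \<le> T + d"
  shows "L + R * (t - T) \<le> R * d"
proof -
  have "L / R \<le> m * L / R" using m L R by (simp add: divide_right_mono)
  then have "t + L / R \<le> T + d" using ts e by linarith
  then have "R * (t + L / R) \<le> R * (T + d)" using R by (intro mult_left_mono) auto
  moreover have "R * (t + L / R) = R * t + L" using R by (simp add: distrib_left)
  ultimately show ?thesis by (simp add: algebra_simps)
qed

lemma aux_Rd: "0 < (R::real) \<Longrightarrow> R * (x * L / R) = x * L" by simp

locale setting =
  fixes K N M :: nat and \<phi> :: "nat \<Rightarrow> real" and r L :: real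
    and P :: "(nat \<times> nat) set" and a :: "nat \<times> nat \<Rightarrow> real"
    and W :: "nat \<Rightarrow> real \<Rightarrow> real" and Wt :: "real \<Rightarrow> nat \<Rightarrow> real \<Rightarrow> real"
    and s :: "nat \<Rightarrow> real" and S :: "nat \<Rightarrow> (nat \<times> nat) set" and nb :: enat
  assumes phi_pos: "\<And>k. k < K \<Longrightarrow> \<phi> k > 0"
    and N_pos: "N \<ge> 1" and r_pos: "r > 0" and L_pos: "L > 0" and M_pos: "M \<ge> 1"
    and P_users: "\<And>k i. (k, i) \<in> P \<Longrightarrow> k < K"
    and P_closed: "\<And>k i j. (k, i) \<in> P \<Longrightarrow> j < i \<Longrightarrow> (k, j) \<in> P"
    and arr_nonneg: "\<And>p. p \<in> P \<Longrightarrow> a p \<ge> 0"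
    and arr_mono: "\<And>k i j. (k, i) \<in> P \<Longrightarrow> j \<le> i \<Longrightarrow> a (k, j) \<le> a (k, i)"
    and loc_finite: "\<And>T. finite {p \<in> P. a p \<le> T}"
    and gps: "is_gps K \<phi> N r (\<lambda>k t. cum_arr P a L k t) W"
    and gps_trunc: "\<And>\<tau>. \<tau> \<ge> 0 \<Longrightarrow> is_gps K \<phi> N r (\<lambda>k t. cum_arr P a L k (min t \<tau>)) (Wt \<tau>)"
    and mpgps: "is_mpgps P a L N r M Wt s S nb"
begin

abbreviation "R \<equiv> real N * r"
abbreviation "Sset k t \<equiv> {i. (k, i) \<in> P \<and> a (k, i) \<le> t}"

lemma R_pos: "R > 0" using N_pos r_pos by simp

lemma Sset_finite: "finite (Sset k t)"
proof -
  have "Sset k t = snd ` {p \<in> P. a p \<le> t \<and> fst p = k}" by force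
  moreover have "finite {p \<in> P. a p \<le> t \<and> fst p = k}"
    by (rule finite_subset[OF _ loc_finite[of t]]) auto
  ultimately show ?thesis by simp
qed

lemma Sset_eq: "Sset k t = {..<card (Sset k t)}"
proof (rule down_closed_eq[OF Sset_finite])
  fix i j assume i: "i \<in> Sset k t" and j: "j < i"
  have "(k, j) \<in> P" using P_closed[of k i j] i j by auto
  moreover have "a (k, j) \<le> a (k, i)" using arr_mono[of k i j] i j by auto
  ultimately show "j \<in> Sset k t" using i by auto
qed

lemma cum_mono: "s1 \<le> t \<Longrightarrow> cum_arr P a L k s1 \<le> cum_arr P a L k t"
  unfolding cum_arr_def using L_pos
  by (auto intro!: mult_left_mono card_mono[OF Sset_finite])

lemma cum_ge:
  assumes "(k, i) \<in> P" "a (k, i) \<le> t"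
  shows "real (Suc i) * L \<le> cum_arr P a L k t"
proof -
  have "i \<in> Sset k t" using assms by auto
  then have "i < card (Sset k t)" using Sset_eq by blast
  then show ?thesis unfolding cum_arr_def using L_pos by (simp add: mult.commute)
qed

lemma cum_le:
  assumes "real (Suc i) * L \<le> cum_arr P a L k t"
  shows "(k, i) \<in> P \<and> a (k, i) \<le> t"
proof -
  have "real (Suc i) \<le> real (card (Sset k t))" using assms L_pos unfolding cum_arr_def
    by (simp add: mult.commute)
  then have "i < card (Sset k t)" by simp
  then have "i \<in> Sset k t" using Sset_eq by blast
  then show ?thesis by auto
qed

lemma cum_rc:
  assumes "0 \<le> t0"
  shows "\<exists>\<delta>>0. \<forall>u. t0 \<le> u \<and> u < t0 + \<delta> \<longrightarrow> (\<forall>k. cum_arr P a L k u = cum_arr P a L k t0)"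
proof -
  define F where "F = (\<lambda>p. a p - t0) ` {p \<in> P. a p \<le> t0 + 1 \<and> t0 < a p}"
  have finF: "finite (insert 1 F)" unfolding F_def
    by (auto intro: finite_subset[OF _ loc_finite[of "t0+1"]])
  define \<delta> where "\<delta> = Min (insert 1 F)"
  have dpos: "\<delta> > 0" unfolding \<delta>_def F_def using finF
    by (subst Min_gr_iff) (auto simp: F_def)
  have dle: "\<delta> \<le> 1" unfolding \<delta>_def using finF by auto
  have dle2: "\<delta> \<le> a p - t0" if "p \<in> P" "a p \<le> t0 + 1" "t0 < a p" for p
    unfolding \<delta>_def using finF that by (auto simp: F_def intro!: Min_le)
  show ?thesis
  proof (intro exI[of _ \<delta>] conjI allI impI)
    show "\<delta> > 0" by (rule dpos)
    fix u k assume u: "t0 \<le> u \<and> u < t0 + \<delta>"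
    have "Sset k u = Sset k t0"
    proof (intro set_eqI iffI)
      fix i assume i: "i \<in> Sset k u"
      show "i \<in> Sset k t0"
      proof (rule ccontr)
        assume "i \<notin> Sset k t0"
        then have "t0 < a (k, i)" using i by auto
        moreover have "a (k, i) \<le> t0 + 1" using i u dle by auto
        ultimately have "\<delta> \<le> a (k, i) - t0" using i by (intro dle2) auto
        then show False using i u by auto
      qed
    next
      fix i assume "i \<in> Sset k t0" then show "i \<in> Sset k u" using u by auto
    qed
    then show "cum_arr P a L k u = cum_arr P a L k t0" unfolding cum_arr_def by simp
  qed
qed

lemma gps_W: "gps_sys K \<phi> N r (\<lambda>k t. cum_arr P a L k t) W"
proof (unfold_locales)
  show "0 < R" by (rule R_pos)
  show "is_gps K \<phi> N r (\<lambda>k t. cum_arr P a L k t) W" by (rule gps)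
  fix t0 :: real assume "0 \<le> t0"
  then show "\<exists>\<delta>>0. \<forall>u. t0 \<le> u \<and> u < t0 + \<delta> \<longrightarrow> (\<forall>k<K. cum_arr P a L k u = cum_arr P a L k t0)"
    using cum_rc by blast
next
  fix k :: nat and s1 t :: real assume "s1 \<le> t"
  then show "cum_arr P a L k s1 \<le> cum_arr P a L k t" by (rule cum_mono)
next
  fix k :: nat and t :: real show "0 \<le> cum_arr P a L k t" unfolding cum_arr_def using L_pos by simp
qed (rule phi_pos)

lemma gps_Wt:
  assumes tau: "0 \<le> \<tau>"
  shows "gps_sys K \<phi> N r (\<lambda>k t. cum_arr P a L k (min t \<tau>)) (Wt \<tau>)"
proof (unfold_locales)
  show "0 < R" by (rule R_pos)
  show "is_gps K \<phi> N r (\<lambda>k t. cum_arr P a L k (min t \<tau>)) (Wt \<tau>)" by (rule gps_trunc[OF tau])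
  fix t0 :: real assume t0: "0 \<le> t0"
  obtain \<delta> where d: "\<delta> > 0" "\<And>u k. min t0 \<tau> \<le> u \<Longrightarrow> u < min t0 \<tau> + \<delta> \<Longrightarrow> cum_arr P a L k u = cum_arr P a L k (min t0 \<tau>)"
    using cum_rc[of "min t0 \<tau>"] t0 tau by auto
  show "\<exists>\<delta>>0. \<forall>u. t0 \<le> u \<and> u < t0 + \<delta> \<longrightarrow> (\<forall>k<K. cum_arr P a L k (min u \<tau>) = cum_arr P a L k (min t0 \<tau>))"
  proof (intro exI[of _ \<delta>] conjI allI impI)
    fix u k assume u: "t0 \<le> u \<and> u < t0 + \<delta>"
    show "cum_arr P a L k (min u \<tau>) = cum_arr P a L k (min t0 \<tau>)"
      by (rule d(2)) (use u d(1) in auto)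
  qed (rule d(1))
next
  fix k :: nat and s1 t :: real assume "s1 \<le> t"
  then show "cum_arr P a L k (min s1 \<tau>) \<le> cum_arr P a L k (min t \<tau>)" by (intro cum_mono) auto
next
  fix k :: nat and t :: real show "0 \<le> cum_arr P a L k (min t \<tau>)" unfolding cum_arr_def using L_pos by simp
qed (rule phi_pos)


abbreviation "fin_by q T \<equiv> real (Suc (snd q)) * L \<le> W (fst q) T"

lemma Wt_eq:
  assumes tau: "0 \<le> \<tau>" and k: "k < K" and t: "0 \<le> t" "t \<le> \<tau>"
  shows "Wt \<tau> k t = W k t"
  by (rule gps_unique[OF gps_W gps_Wt[OF tau] tau _ k t]) auto

lemma done_arrived:
  assumes q: "fst q < K" and T: "0 \<le> T" and d: "fin_by q T"
  shows "q \<in> P \<and> a q \<le> T"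
proof -
  interpret G: gps_sys K \<phi> N r "\<lambda>k t. cum_arr P a L k t" W by (rule gps_W)
  have "W (fst q) T \<le> cum_arr P a L (fst q) T" by (rule G.W_le_A[OF q T])
  then have "(fst q, snd q) \<in> P \<and> a (fst q, snd q) \<le> T" using d by (intro cum_le) simp
  then show ?thesis by simp
qed

lemma OP:
  assumes tau: "0 \<le> \<tau>" and q0: "(k0, i0) \<in> P" "a (k0, i0) \<le> \<tau>"
    and q1: "(k1, i1) \<in> P" "a (k1, i1) \<le> \<tau>" and T: "0 \<le> T"
    and d1: "real (Suc i1) * L \<le> W k1 T" and d0: "W k0 T < real (Suc i0) * L"
  shows "gps_finish (Wt \<tau>) L (k1, i1) < gps_finish (Wt \<tau>) L (k0, i0)"
proof -
  interpret G: gps_sys K \<phi> N r "\<lambda>k t. cum_arr P a L k t" W by (rule gps_W)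
  interpret H: gps_sys K \<phi> N r "\<lambda>k t. cum_arr P a L k (min t \<tau>)" "Wt \<tau>" by (rule gps_Wt[OF tau])
  have k0: "k0 < K" and k1: "k1 < K" using q0 q1 P_users by auto
  define c0 where "c0 = real (Suc i0) * L"
  define c1 where "c1 = real (Suc i1) * L"
  have c0A: "c0 \<le> cum_arr P a L k0 \<tau>" unfolding c0_def by (rule cum_ge[OF q0])
  have c1A: "c1 \<le> cum_arr P a L k1 \<tau>" unfolding c1_def by (rule cum_ge[OF q1])
  have noarr: "cum_arr P a L k (min t \<tau>) = cum_arr P a L k (min \<tau> \<tau>)" if "\<tau> \<le> t" "k < K" for t k
    using that by simp
  have live: "\<exists>t\<ge>\<tau>. c \<le> Wt \<tau> k t" if "k < K" "c \<le> cum_arr P a L k \<tau>" for k c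
    by (rule H.liveness[OF tau noarr that(1)]) (use that in auto)
  have key: "\<exists>T''. 0 \<le> T'' \<and> c1 \<le> Wt \<tau> k1 T'' \<and> Wt \<tau> k0 T'' < c0"
  proof (cases "T \<le> \<tau>")
    case True
    then show ?thesis using Wt_eq[OF tau k0 T True] Wt_eq[OF tau k1 T True] d0 d1 T
      unfolding c0_def c1_def by auto
  next
    case False
    then have Tt: "\<tau> \<le> T" by simp
    have e0: "Wt \<tau> k0 \<tau> = W k0 \<tau>" and e1: "Wt \<tau> k1 \<tau> = W k1 \<tau>"
      using Wt_eq[OF tau k0 tau] Wt_eq[OF tau k1 tau] by auto
    show ?thesis
    proof (cases "c1 \<le> W k1 \<tau>")
      case True
      have "W k0 \<tau> \<le> W k0 T" by (rule G.W_mono[OF k0 tau Tt])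
      then show ?thesis using True e0 e1 d0 tau unfolding c0_def by (intro exI[of _ \<tau>]) auto
    next
      case False
      then have lt1: "W k1 \<tau> < c1" by simp
      have bl: "W k0 s < cum_arr P a L k0 s" if "\<tau> \<le> s" "s < T" for s
      proof -
        have "W k0 s \<le> W k0 T" using G.W_mono[OF k0 _ less_imp_le[OF that(2)]] that tau by auto
        also have "\<dots> < c0" using d0 unfolding c0_def .
        also have "\<dots> \<le> cum_arr P a L k0 s" using c0A cum_mono[OF that(1), of k0] by linarith
        finally show ?thesis .
      qed
      have rat1: "(W k1 T - W k1 \<tau>) * \<phi> k0 \<le> (W k0 T - W k0 \<tau>) * \<phi> k1"
        by (rule G.ratio[OF k0 k1 tau Tt bl])
      obtain t1 where t1: "t1 \<ge> \<tau>" "c1 \<le> Wt \<tau> k1 t1" using live[OF k1 c1A] by blast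
      obtain T' where T': "\<tau> \<le> T'" "T' \<le> t1" "Wt \<tau> k1 T' = c1"
        "\<forall>s. \<tau> \<le> s \<and> s < T' \<longrightarrow> Wt \<tau> k1 s < c1"
        using H.first_hit_eq[OF k1 tau _ t1(1) t1(2)] lt1 e1 by auto
      have bl2: "Wt \<tau> k1 s < cum_arr P a L k1 (min s \<tau>)" if "\<tau> \<le> s" "s < T'" for s
        using T'(4) that c1A by auto
      have rat2: "(Wt \<tau> k0 T' - Wt \<tau> k0 \<tau>) * \<phi> k1 \<le> (Wt \<tau> k1 T' - Wt \<tau> k1 \<tau>) * \<phi> k0"
        by (rule H.ratio[OF k1 k0 tau T'(1) bl2])
      have p0: "\<phi> k0 > 0" "\<phi> k1 > 0" using phi_pos k0 k1 by auto
      have "(c1 - W k1 \<tau>) * \<phi> k0 \<le> (W k1 T - W k1 \<tau>) * \<phi> k0"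
        using d1 p0 unfolding c1_def by (intro mult_right_mono) auto
      also have "\<dots> \<le> (W k0 T - W k0 \<tau>) * \<phi> k1" by (rule rat1)
      also have "\<dots> < (c0 - W k0 \<tau>) * \<phi> k1"
        using d0 p0 unfolding c0_def by (intro mult_strict_right_mono) auto
      finally have f1: "(c1 - W k1 \<tau>) * \<phi> k0 < (c0 - W k0 \<tau>) * \<phi> k1" .
      have r2: "(Wt \<tau> k0 T' - W k0 \<tau>) * \<phi> k1 \<le> (c1 - W k1 \<tau>) * \<phi> k0"
        using rat2 unfolding T'(3) e0 e1 .
      have "(Wt \<tau> k0 T' - W k0 \<tau>) * \<phi> k1 < (c0 - W k0 \<tau>) * \<phi> k1"
        using f1 r2 by linarith
      then have "Wt \<tau> k0 T' < c0" using p0 by (simp add: mult_less_cancel_right)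
      then show ?thesis using T'(3) T'(1) tau by (intro exI[of _ T']) auto
    qed
  qed
  then obtain T'' where T'': "0 \<le> T''" "c1 \<le> Wt \<tau> k1 T''" "Wt \<tau> k0 T'' < c0" by blast
  have ne0: "{t. 0 \<le> t \<and> c0 \<le> Wt \<tau> k0 t} \<noteq> {}"
    using live[OF k0 c0A] tau by force
  have "gps_finish (Wt \<tau>) L (k1, i1) \<le> T''"
    unfolding gps_finish_def using H.finish_le[OF T''(1), of c1 k1] T''(2) unfolding c1_def by simp
  also have "T'' < gps_finish (Wt \<tau>) L (k0, i0)"
    unfolding gps_finish_def using H.finish_lt[OF k0 ne0 T''(1) T''(3)] unfolding c0_def by simp
  finally show ?thesis .
qed


abbreviation "e h \<equiv> batch_end L N r s S h"

lemma mp: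
  assumes "enat h < nb"
  shows "S h \<noteq> {} \<and> S h \<subseteq> queued_at P a s S h \<and> card (S h) = min M (card (queued_at P a s S h)) \<and>
        (\<forall>p\<in>S h. \<forall>q\<in>queued_at P a s S h - S h.
            gps_finish (Wt (s h)) L p \<le> gps_finish (Wt (s h)) L q) \<and>
        s h = max (if h = 0 then 0 else batch_end L N r s S (h - 1))
                  (Inf (a ` (P - served_before S h)))"
  using mpgps assms unfolding is_mpgps_def by blast

lemma enat_Suc_less: "enat (Suc h) < nb \<Longrightarrow> enat h < nb"
  by (metis Suc_n_not_le_n enat_ord_simps(2) linorder_le_less_linear order.strict_trans)

lemma enat_le_less: "enat h < nb \<Longrightarrow> j \<le> h \<Longrightarrow> enat j < nb"
  by (meson enat_ord_simps(1) le_less_trans)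

lemma S_sub:
  assumes "enat h < nb" "q \<in> S h"
  shows "q \<in> P" "a q \<le> s h" "q \<notin> served_before S h"
  using mp[OF assms(1)] assms(2) unfolding queued_at_def by auto

lemma S_fin: "enat h < nb \<Longrightarrow> finite (S h)"
  by (rule finite_subset[OF _ loc_finite[of "s h"]]) (use S_sub in auto)

lemma S_card: assumes "enat h < nb" shows "1 \<le> card (S h)" "card (S h) \<le> M"
proof -
  have ne: "S h \<noteq> {}" using mp[OF assms] by blast
  have "card (S h) > 0" using ne S_fin[OF assms] by (simp add: card_gt_0_iff)
  then show "1 \<le> card (S h)" by simp
  show "card (S h) \<le> M" using mp[OF assms] by simp
qed

lemma S_disj:
  assumes "enat h < nb" "j < h"
  shows "S j \<inter> S h = {}"
  using S_sub(3)[OF assms(1)] assms(2) unfolding served_before_def by blast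

lemma e_eq: "e h = s h + real (card (S h)) * L / R"
  unfolding batch_end_def by simp

lemma s_next:
  assumes "enat (Suc h) < nb"
  shows "e h \<le> s (Suc h)"
  using mp[OF assms] by simp

lemma s_nonneg: "enat h < nb \<Longrightarrow> 0 \<le> s h"
proof (induction h)
  case 0 then show ?case using mp[OF 0] by simp
next
  case (Suc h)
  have h: "enat h < nb" using enat_Suc_less[OF Suc.prems] .
  have "0 \<le> s h" using Suc.IH[OF h] .
  moreover have "s h \<le> e h" unfolding e_eq using R_pos L_pos by simp
  ultimately show ?case using s_next[OF Suc.prems] by linarith
qed

lemma s_lower: "enat h < nb \<Longrightarrow> real h * (L / R) \<le> s h"
proof (induction h)
  case 0 then show ?case using s_nonneg[OF 0] by simp
next
  case (Suc h)
  have h: "enat h < nb" using enat_Suc_less[OF Suc.prems] .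
  have c: "1 \<le> real (card (S h))" using S_card(1)[OF h] by simp
  have "L / R \<le> real (card (S h)) * L / R"
    using c L_pos R_pos by (simp add: divide_right_mono mult_le_cancel_right1)
  then have "s h + L / R \<le> e h" unfolding e_eq by simp
  moreover have "real (Suc h) * (L / R) = real h * (L / R) + L / R" by (simp only: of_nat_Suc distrib_right mult_1)
  ultimately show ?case using Suc.IH[OF h] s_next[OF Suc.prems] by linarith
qed

lemma OL:
  assumes h: "enat h < nb" and q0: "q0 \<in> S h" and q: "q \<in> queued_at P a s S h - S h"
    and T: "0 \<le> T" and dq: "fin_by q T"
  shows "fin_by q0 T"
proof (rule ccontr)
  assume nd: "\<not> fin_by q0 T"
  obtain k0 i0 where q0e: "q0 = (k0, i0)" by (cases q0)
  obtain k1 i1 where q1e: "q = (k1, i1)" by (cases q)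
  have q0P: "(k0, i0) \<in> P" "a (k0, i0) \<le> s h" using S_sub[OF h q0] q0e by auto
  have q1P: "(k1, i1) \<in> P" "a (k1, i1) \<le> s h" using q q1e unfolding queued_at_def by auto
  have "gps_finish (Wt (s h)) L (k1, i1) < gps_finish (Wt (s h)) L (k0, i0)"
    by (rule OP[OF s_nonneg[OF h] q0P q1P T]) (use dq nd q0e q1e in auto)
  moreover have "gps_finish (Wt (s h)) L q0 \<le> gps_finish (Wt (s h)) L q"
    using mp[OF h] q0 q by blast
  ultimately show False using q0e q1e by simp
qed

lemma G_core:
  assumes u: "0 \<le> u" "u \<le> T" and XP: "X \<subseteq> P" and fin: "finite X"
    and dX: "\<And>q. q \<in> X \<Longrightarrow> fin_by q T" and nX: "\<And>q. q \<in> X \<Longrightarrow> nk (fst q) \<le> snd q"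
    and nk: "\<And>k. k < K \<Longrightarrow> W k u \<le> real (nk k) * L"
  shows "real (card X) * L \<le> R * (T - u)"
proof -
  interpret G: gps_sys K \<phi> N r "\<lambda>k t. cum_arr P a L k t" W by (rule gps_W)
  define Y where "Y k = {i. (k, i) \<in> X}" for k
  have finY: "finite (Y k)" for k
  proof -
    have "Y k \<subseteq> snd ` X" unfolding Y_def by force
    then show ?thesis using fin by (auto intro: finite_subset)
  qed
  have sub: "X \<subseteq> (\<Union>k\<in>{..<K}. Pair k ` Y k)"
    using XP P_users unfolding Y_def by force
  have "card X \<le> card (\<Union>k\<in>{..<K}. Pair k ` Y k)"
    by (rule card_mono[OF _ sub]) (auto simp: finY)
  also have "\<dots> \<le> (\<Sum>k<K. card (Pair k ` Y k))" by (rule card_UN_le) simp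
  also have "\<dots> = (\<Sum>k<K. card (Y k))" by (simp add: card_image inj_on_def)
  finally have cX: "real (card X) \<le> (\<Sum>k<K. real (card (Y k)))" by (simp flip: of_nat_sum)
  have each: "real (card (Y k)) * L \<le> W k T - W k u" if k: "k < K" for k
  proof (rule per_user[OF finY _ nk[OF k] G.W_mono[OF k u(1) u(2)] L_pos])
    fix i assume "i \<in> Y k"
    then have "(k, i) \<in> X" unfolding Y_def by simp
    then show "nk k \<le> i \<and> real (Suc i) * L \<le> W k T" using dX nX by force
  qed
  have "real (card X) * L \<le> (\<Sum>k<K. real (card (Y k))) * L"
    using cX L_pos by (intro mult_right_mono) auto
  also have "\<dots> = (\<Sum>k<K. real (card (Y k)) * L)" by (simp add: sum_distrib_right)
  also have "\<dots> \<le> (\<Sum>k<K. W k T - W k u)" by (rule sum_mono) (use each in auto)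
  also have "\<dots> \<le> R * (T - u)" by (rule G.sum_bound[OF u])
  finally show ?thesis .
qed

lemma G_gt:
  assumes u: "0 \<le> u" and T: "0 \<le> T" and XP: "X \<subseteq> P" and fin: "finite X" and ne: "X \<noteq> {}"
    and dX: "\<And>q. q \<in> X \<Longrightarrow> fin_by q T \<and> u < a q"
  shows "real (card X) * L \<le> R * (T - u)"
proof -
  interpret G: gps_sys K \<phi> N r "\<lambda>k t. cum_arr P a L k t" W by (rule gps_W)
  obtain q where q: "q \<in> X" using ne by blast
  have "a q \<le> T" using done_arrived[of q T] dX[OF q] XP q P_users T
    by (cases q) auto
  then have uT: "u \<le> T" using dX[OF q] by simp
  show ?thesis
  proof (rule G_core[OF u uT XP fin, of "\<lambda>k. card (Sset k u)"])
    fix q assume qX: "q \<in> X"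
    then show "fin_by q T" using dX by blast
    show "card (Sset (fst q) u) \<le> snd q"
    proof (rule ccontr)
      assume "\<not> card (Sset (fst q) u) \<le> snd q"
      then have "snd q \<in> {..<card (Sset (fst q) u)}" by simp
      then have "snd q \<in> Sset (fst q) u" by (simp only: Sset_eq[of "fst q" u, symmetric])
      then show False using dX[OF qX] by simp
    qed
  next
    fix k assume k: "k < K"
    show "W k u \<le> real (card (Sset k u)) * L"
      using G.W_le_A[OF k u] unfolding cum_arr_def by (simp add: mult.commute)
  qed
qed

lemma G_0:
  assumes T: "0 \<le> T" and XP: "X \<subseteq> P" and fin: "finite X"
    and dX: "\<And>q. q \<in> X \<Longrightarrow> fin_by q T"
  shows "real (card X) * L \<le> R * T"
proof -
  interpret G: gps_sys K \<phi> N r "\<lambda>k t. cum_arr P a L k t" W by (rule gps_W)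
  have "real (card X) * L \<le> R * (T - 0)"
    by (rule G_core[OF order_refl T XP fin dX, of "\<lambda>k. 0"]) (auto simp: G.W0)
  then show ?thesis by simp
qed

lemma G_ge:
  assumes s0: "0 \<le> s0" and T: "0 \<le> T" and XP: "X \<subseteq> P" and fin: "finite X" and ne: "X \<noteq> {}"
    and dX: "\<And>q. q \<in> X \<Longrightarrow> fin_by q T \<and> s0 \<le> a q"
  shows "real (card X) * L \<le> R * (T - s0)"
proof (rule ccontr)
  assume na: "\<not> real (card X) * L \<le> R * (T - s0)"
  define g where "g = real (card X) * L - R * (T - s0)"
  have g: "g > 0" using na unfolding g_def by simp
  have Rp: "R > 0" by (rule R_pos)
  have half: "R * (g / (2 * R)) = g / 2" by (rule aux_cancel2[OF Rp])
  show False
  proof (cases "s0 \<le> g / (2 * R)")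
    case True
    have "real (card X) * L \<le> R * T" by (rule G_0[OF T XP fin]) (use dX in blast)
    moreover have "R * s0 \<le> R * (g / (2 * R))" using True Rp by (intro mult_left_mono) auto
    moreover have "R * T = R * (T - s0) + R * s0" by (simp add: algebra_simps)
    ultimately show False using half g g_def by linarith
  next
    case False
    define u where "u = s0 - g / (2 * R)"
    have u: "0 \<le> u" "u < s0" using False g Rp unfolding u_def by auto
    have "real (card X) * L \<le> R * (T - u)"
      by (rule G_gt[OF u(1) T XP fin ne]) (use dX u in force)
    moreover have "R * (T - u) = R * (T - s0) + R * (g / (2 * R))"
      unfolding u_def by (simp add: algebra_simps)
    ultimately show False using half g g_def by linarith
  qed
qed


lemma served:
  assumes pP: "p \<in> P" and T: "0 \<le> T" and dp: "fin_by p T"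
  shows "\<exists>h. enat h < nb \<and> p \<in> S h"
proof (rule ccontr)
  assume ns: "\<not> (\<exists>h. enat h < nb \<and> p \<in> S h)"
  show False
  proof (cases nb)
    case (enat n)
    then have "served_before S n = P" using mpgps unfolding is_mpgps_def by blast
    then obtain h where "h < n" "p \<in> S h" using pP unfolding served_before_def by auto
    then show False using ns enat by auto
  next
    case infinity
    then have all: "enat h < nb" for h by simp
    define D where "D = {q \<in> P. a q \<le> T}"
    have finD: "finite D" unfolding D_def by (rule loc_finite)
    define c where "c = L / R"
    have cpos: "c > 0" unfolding c_def using L_pos R_pos by simp
    define h1 where "h1 = nat \<lceil>a p / c\<rceil>"
    have "a p / c \<le> real h1" unfolding h1_def by linarith
    then have h1c: "a p \<le> real h1 * c" using cpos by (simp add: pos_divide_le_eq)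
    have inD: "S h \<subseteq> D" if hh: "h1 \<le> h" for h
    proof
      fix q0 assume q0: "q0 \<in> S h"
      have "real h1 * c \<le> real h * c" using hh cpos by (intro mult_right_mono) auto
      also have "\<dots> \<le> s h" using s_lower[OF all] unfolding c_def .
      finally have ap: "a p \<le> s h" using h1c by linarith
      have "p \<notin> served_before S h" using ns all unfolding served_before_def by auto
      then have pq: "p \<in> queued_at P a s S h - S h" using pP ap ns all unfolding queued_at_def by auto
      have "fin_by q0 T" by (rule OL[OF all q0 pq T dp])
      moreover have "fst q0 < K" using S_sub(1)[OF all q0] P_users by (cases q0) auto
      ultimately show "q0 \<in> D" using done_arrived[of q0 T] T unfolding D_def by auto
    qed
    define n where "n = Suc (card D)"
    define U where "U = (\<Union>h\<in>{h1..<h1+n}. S h)"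
    have "card U = (\<Sum>h\<in>{h1..<h1+n}. card (S h))" unfolding U_def
    proof (rule card_UN_disjoint)
      show "\<forall>i\<in>{h1..<h1 + n}. \<forall>j\<in>{h1..<h1 + n}. i \<noteq> j \<longrightarrow> S i \<inter> S j = {}"
        using S_disj[OF all] by (metis inf_commute linorder_neqE_nat)
    qed (auto intro: S_fin[OF all])
    also have "\<dots> \<ge> (\<Sum>h\<in>{h1..<h1+n}. 1)" by (rule sum_mono) (use S_card(1)[OF all] in auto)
    finally have "n \<le> card U" by simp
    moreover have "U \<subseteq> D" unfolding U_def by (rule UN_least) (use inD in auto)
    then have "card U \<le> card D" by (rule card_mono[OF finD])
    ultimately show False unfolding n_def by simp
  qed
qed

lemma busy_arr:
  assumes c: "enat c < nb" and bs: "c = 0 \<or> e (c - 1) < s c" and j: "c \<le> j" "enat j < nb"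
    and q: "q \<in> S j"
  shows "s c \<le> a q"
proof -
  have qP: "q \<in> P" by (rule S_sub(1)[OF j(2) q])
  have "q \<notin> served_before S c"
  proof
    assume "q \<in> served_before S c"
    then obtain j' where "j' < c" "q \<in> S j'" unfolding served_before_def by auto
    then show False using S_disj[OF j(2), of j'] j q by auto
  qed
  then have qin: "q \<in> P - served_before S c" using qP by simp
  define I where "I = Inf (a ` (P - served_before S c))"
  have Ile: "I \<le> a q" unfolding I_def
    by (rule cInf_lower) (use qin arr_nonneg in \<open>auto intro: bdd_belowI[of _ 0]\<close>)
  have sc: "s c = max (if c = 0 then 0 else e (c - 1)) I" using mp[OF c] unfolding I_def by simp
  show ?thesis
  proof (cases "c = 0")
    case True
    then show ?thesis using sc Ile arr_nonneg[OF qP] by simp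
  next
    case False
    then have "e (c - 1) < s c" using bs by simp
    then have "s c = I" using sc False by (simp add: max_def split: if_splits)
    then show ?thesis using Ile by simp
  qed
qed

lemma delay:
  assumes pP: "p \<in> P" and T: "0 \<le> T" and dp: "fin_by p T" and h: "enat h < nb" and ph: "p \<in> S h"
  shows "e h \<le> T + (2 * real M - 1) * L / R"
proof -
  define Q where "Q j \<longleftrightarrow> (j = 0 \<or> e (j - 1) < s j) \<or> (j < h \<and> (\<exists>q\<in>S j. \<not> fin_by q T))" for j
  define c where "c = (GREATEST j. j \<le> h \<and> Q j)"
  have cQ: "c \<le> h \<and> Q c" unfolding c_def by (rule GreatestI_nat[of _ 0 h]) (auto simp: Q_def)
  have cmax: "j \<le> c" if "j \<le> h" "Q j" for j
    unfolding c_def by (rule Greatest_le_nat[of _ j h]) (use that in auto)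
  have ch: "c \<le> h" using cQ by simp
  have cnb: "enat c < nb" by (rule enat_le_less[OF h ch])
  have contig: "s j = e (j - 1)" if "c < j" "j \<le> h" for j
  proof -
    have nQ: "\<not> Q j" using cmax[of j] that by auto
    then have j0: "j \<noteq> 0" and ne: "\<not> e (j - 1) < s j" unfolding Q_def by auto
    have "enat (Suc (j - 1)) < nb" using enat_le_less[OF h that(2)] j0 by simp
    then have "e (j - 1) \<le> s (Suc (j - 1))" by (rule s_next)
    then show ?thesis using ne j0 by simp
  qed
  have alldone: "fin_by q T" if "c < j" "j < h" "q \<in> S j" for j q
    using cmax[of j] that unfolding Q_def by force
  have tele: "c \<le> m \<longrightarrow> m \<le> h \<longrightarrow> e m = s c + real (\<Sum>j\<in>{c..m}. card (S j)) * L / R" for m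
  proof (induction m)
    case 0
    then show ?case unfolding e_eq by auto
  next
    case (Suc m)
    show ?case
    proof (intro impI)
      assume m: "c \<le> Suc m" "Suc m \<le> h"
      show "e (Suc m) = s c + real (\<Sum>j\<in>{c..Suc m}. card (S j)) * L / R"
      proof (cases "c = Suc m")
        case True
        then show ?thesis unfolding e_eq by simp
      next
        case False
        then have cm: "c \<le> m" using m by simp
        have IH: "e m = s c + real (\<Sum>j\<in>{c..m}. card (S j)) * L / R" using Suc.IH cm m by simp
        have "s (Suc m) = e m" using contig[of "Suc m"] cm m by simp
        then have "e (Suc m) = e m + real (card (S (Suc m))) * L / R" unfolding e_eq by simp
        also have "\<dots> = s c + (real (\<Sum>j\<in>{c..m}. card (S j)) + real (card (S (Suc m)))) * L / R"
          unfolding IH by (simp add: distrib_right add_divide_distrib)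
        also have "(\<Sum>j\<in>{c..Suc m}. card (S j)) = (\<Sum>j\<in>{c..m}. card (S j)) + card (S (Suc m))"
          using cm by simp
        ultimately show ?thesis by simp
      qed
    qed
  qed
  have eh: "e h = s c + real (\<Sum>j\<in>{c..h}. card (S j)) * L / R" using tele[of h] ch by simp
  have M1: "1 \<le> M" by (rule M_pos)
  have fin_all: "finite (S j)" if "j \<le> h" for j by (rule S_fin[OF enat_le_less[OF h that]])
  have count: "card (\<Union>j\<in>J. S j) = (\<Sum>j\<in>J. card (S j))
        \<and> card (\<Union>j\<in>J. S j) \<le> card {q \<in> (\<Union>j\<in>J. S j). fin_by q T} + (M - 1)"
    if J: "J \<subseteq> {c..h}" "finite J" and Jd: "\<And>j q. j \<in> J \<Longrightarrow> j < h \<Longrightarrow> q \<in> S j \<Longrightarrow> fin_by q T" for J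
  proof
    let ?U = "\<Union>j\<in>J. S j"
    show cU: "card ?U = (\<Sum>j\<in>J. card (S j))"
    proof (rule card_UN_disjoint[OF J(2)])
      show "\<forall>i\<in>J. finite (S i)" using fin_all J(1) by auto
      show "\<forall>i\<in>J. \<forall>j\<in>J. i \<noteq> j \<longrightarrow> S i \<inter> S j = {}"
      proof (intro ballI impI)
        fix i j assume ij: "i \<in> J" "j \<in> J" "i \<noteq> j"
        then have hi: "enat i < nb" "enat j < nb" using J(1) enat_le_less[OF h] by auto
        show "S i \<inter> S j = {}"
        proof (cases "i < j")
          case True then show ?thesis using S_disj[OF hi(2) True] by blast
        next
          case False then have "j < i" using ij by simp
          then show ?thesis using S_disj[OF hi(1)] by blast
        qed
      qed
    qed
    have finU: "finite ?U" using fin_all J by auto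
    have ND: "?U - {q \<in> ?U. fin_by q T} \<subseteq> S h - {p}"
    proof
      fix q assume q: "q \<in> ?U - {q \<in> ?U. fin_by q T}"
      then obtain j where j: "j \<in> J" "q \<in> S j" and nd: "\<not> fin_by q T" by auto
      have "j \<le> h" using J(1) j by auto
      moreover have "\<not> j < h" using Jd[OF j(1) _ j(2)] nd by auto
      ultimately have "j = h" by simp
      then show "q \<in> S h - {p}" using j nd dp by auto
    qed
    have "card (?U - {q \<in> ?U. fin_by q T}) \<le> card (S h - {p})"
      by (rule card_mono[OF _ ND]) (use fin_all in auto)
    also have "\<dots> = card (S h) - 1" using ph fin_all by simp
    also have "\<dots> \<le> M - 1" using S_card(2)[OF h] by simp
    finally have "card (?U - {q \<in> ?U. fin_by q T}) \<le> M - 1" .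
    moreover have "card ?U = card {q \<in> ?U. fin_by q T} + card (?U - {q \<in> ?U. fin_by q T})"
      using finU by (metis (no_types, lifting) Diff_subset card_Diff_subset card_mono diff_add_inverse finite_subset le_add_diff_inverse mem_Collect_eq subsetI)
    ultimately show "card ?U \<le> card {q \<in> ?U. fin_by q T} + (M - 1)" by simp
  qed
  have Rp: "R > 0" by (rule R_pos)
  show ?thesis
  proof (cases "c < h \<and> (\<exists>q0\<in>S c. \<not> fin_by q0 T)")
    case True
    then obtain q0 where ch': "c < h" and q0: "q0 \<in> S c" "\<not> fin_by q0 T" by blast
    define J where "J = {Suc c..h}"
    define U where "U = (\<Union>j\<in>J. S j)"
    define X where "X = {q \<in> U. fin_by q T}"
    have cnt: "card U = (\<Sum>j\<in>J. card (S j)) \<and> card U \<le> card X + (M - 1)"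
      unfolding U_def X_def by (rule count) (use alldone in \<open>auto simp: J_def Suc_le_eq\<close>)
    have pX: "p \<in> X" unfolding X_def U_def J_def using ph dp ch' by auto
    have finX: "finite X" unfolding X_def U_def J_def using fin_all by auto
    have XP: "X \<subseteq> P"
    proof
      fix q assume "q \<in> X"
      then obtain j where j: "j \<in> J" "q \<in> S j" unfolding X_def U_def by auto
      then have "j \<le> h" unfolding J_def by auto
      then show "q \<in> P" using S_sub(1)[OF enat_le_less[OF h] j(2)] by simp
    qed
    have arr: "fin_by q T \<and> s c < a q" if qX: "q \<in> X" for q
    proof -
      obtain j where j: "j \<in> J" "q \<in> S j" and dq: "fin_by q T" using qX unfolding X_def U_def by auto
      have jj: "c < j" "j \<le> h" using j unfolding J_def by auto
      have jnb: "enat j < nb" by (rule enat_le_less[OF h jj(2)])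
      have "\<not> a q \<le> s c"
      proof
        assume aq: "a q \<le> s c"
        have "q \<notin> served_before S c"
        proof
          assume "q \<in> served_before S c"
          then obtain j' where "j' < c" "q \<in> S j'" unfolding served_before_def by auto
          then show False using S_disj[OF jnb, of j'] jj j by auto
        qed
        moreover have "q \<notin> S c" using S_disj[OF jnb jj(1)] j by auto
        ultimately have "q \<in> queued_at P a s S c - S c"
          using aq S_sub(1)[OF jnb j(2)] unfolding queued_at_def by auto
        then have "fin_by q0 T" by (rule OL[OF cnb q0(1) _ T dq])
        then show False using q0 by simp
      qed
      then show ?thesis using dq by simp
    qed
    have GX: "real (card X) * L \<le> R * (T - s c)"
      by (rule G_gt[OF s_nonneg[OF cnb] T XP finX]) (use pX arr in auto)
    have sum_split: "(\<Sum>j\<in>{c..h}. card (S j)) = card (S c) + (\<Sum>j\<in>J. card (S j))"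
      unfolding J_def using ch by (simp add: sum.atLeast_Suc_atMost)
    have "(\<Sum>j\<in>{c..h}. card (S j)) \<le> M + (card X + (M - 1))"
      using sum_split cnt S_card(2)[OF cnb] by linarith
    then have nle: "real (\<Sum>j\<in>{c..h}. card (S j)) \<le> real (card X) + (2 * real M - 1)"
      using M1 by linarith
    have "e h \<le> s c + (T - s c) + (2 * real M - 1) * L / R"
      by (rule aux_final[OF Rp L_pos nle GX eh])
    then show ?thesis by simp
  next
    case False
    have bs: "c = 0 \<or> e (c - 1) < s c" using cQ False unfolding Q_def by auto
    define J where "J = {c..h}"
    define U where "U = (\<Union>j\<in>J. S j)"
    define X where "X = {q \<in> U. fin_by q T}"
    have Jd: "fin_by q T" if "j \<in> J" "j < h" "q \<in> S j" for j q
    proof (cases "j = c")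
      case True then show ?thesis using False that by auto
    next
      case False
      then have "c < j" using that(1) unfolding J_def by auto
      then show ?thesis using alldone[OF _ that(2,3)] by blast
    qed
    have cnt: "card U = (\<Sum>j\<in>J. card (S j)) \<and> card U \<le> card X + (M - 1)"
      unfolding U_def X_def by (rule count) (use Jd in \<open>auto simp: J_def\<close>)
    have pX: "p \<in> X" unfolding X_def U_def J_def using ph dp ch by auto
    have finX: "finite X" unfolding X_def U_def J_def using fin_all by auto
    have XP: "X \<subseteq> P"
    proof
      fix q assume "q \<in> X"
      then obtain j where j: "j \<in> J" "q \<in> S j" unfolding X_def U_def by auto
      then have "j \<le> h" unfolding J_def by auto
      then show "q \<in> P" using S_sub(1)[OF enat_le_less[OF h] j(2)] by simp
    qed
    have arr: "fin_by q T \<and> s c \<le> a q" if qX: "q \<in> X" for q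
    proof -
      obtain j where j: "j \<in> J" "q \<in> S j" and dq: "fin_by q T" using qX unfolding X_def U_def by auto
      have jj: "c \<le> j" "j \<le> h" using j unfolding J_def by auto
      show ?thesis using busy_arr[OF cnb bs jj(1) enat_le_less[OF h jj(2)] j(2)] dq by simp
    qed
    have GX: "real (card X) * L \<le> R * (T - s c)"
      by (rule G_ge[OF s_nonneg[OF cnb] T XP finX]) (use pX arr in auto)
    have nle: "real (\<Sum>j\<in>{c..h}. card (S j)) \<le> real (card X) + (real M - 1)"
      using cnt M1 unfolding J_def by linarith
    have "e h \<le> s c + (T - s c) + (real M - 1) * L / R"
      by (rule aux_final[OF Rp L_pos nle GX eh])
    also have "(real M - 1) * L / R \<le> (2 * real M - 1) * L / R"
      using M1 L_pos Rp by (intro divide_right_mono mult_right_mono) auto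
    finally show ?thesis by simp
  qed
qed


lemma lag:
  assumes t: "0 \<le> t" and k: "k < K"
  shows "W k t - mpgps_served L N r s S nb k t \<le> (2 * real M - 1) * L"
proof -
  interpret G: gps_sys K \<phi> N r "\<lambda>k t. cum_arr P a L k t" W by (rule gps_W)
  have Rp: "R > 0" by (rule R_pos)
  have M1: "1 \<le> M" by (rule M_pos)
  define d where "d = (2 * real M - 1) * L / R"
  have Rd: "R * d = (2 * real M - 1) * L" unfolding d_def by (rule aux_Rd[OF Rp])
  have d0: "0 \<le> d" unfolding d_def using M1 L_pos Rp by (intro divide_nonneg_pos mult_nonneg_nonneg) auto
  define tf where "tf h = min L (max 0 ((t - s h) * R / real (card (S h))))" for h
  define Qs where "Qs = {(h, p). enat h < nb \<and> p \<in> S h \<and> fst p = k \<and> s h < t}"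
  have What: "mpgps_served L N r s S nb k t = (\<Sum>x\<in>Qs. tf (fst x))"
    unfolding mpgps_served_def Qs_def tf_def by (rule sum.cong) auto
  have tf0: "0 \<le> tf h" for h unfolding tf_def using L_pos by simp
  define Hb where "Hb = nat \<lceil>t / (L / R)\<rceil> + 1"
  have finQ: "finite Qs"
  proof -
    have "Qs \<subseteq> (\<Union>h\<in>{h. h < Hb \<and> enat h < nb}. {h} \<times> S h)"
    proof
      fix x assume "x \<in> Qs"
      then obtain h p where x: "x = (h, p)" "enat h < nb" "p \<in> S h" "s h < t" unfolding Qs_def by auto
      have c: "L / R > 0" using L_pos Rp by simp
      have "real h * (L / R) < t" using s_lower[OF x(2)] x(4) by linarith
      then have "real h < t / (L / R)" using pos_less_divide_eq[OF c, of "real h" t] by blast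
      then have "h < Hb" unfolding Hb_def by linarith
      then show "x \<in> (\<Union>h\<in>{h. h < Hb \<and> enat h < nb}. {h} \<times> S h)" using x by auto
    qed
    moreover have "finite (\<Union>h\<in>{h. h < Hb \<and> enat h < nb}. {h} \<times> S h)"
      by (rule finite_UN_I) (auto intro: S_fin)
    ultimately show ?thesis by (rule finite_subset)
  qed
  have What0: "0 \<le> mpgps_served L N r s S nb k t" unfolding What by (rule sum_nonneg) (use tf0 in auto)
  have sub_le: "(\<Sum>x\<in>A. tf (fst x)) \<le> mpgps_served L N r s S nb k t" if "A \<subseteq> Qs" for A
    unfolding What by (rule sum_mono2[OF finQ that]) (use tf0 in auto)
  show ?thesis
  proof (cases "t < d")
    case True
    have "W k t - W k 0 \<le> R * (t - 0)" using G.W_bounds[OF k order_refl t] by simp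
    then have "W k t \<le> R * t" using G.W0[OF k] by simp
    also have "\<dots> \<le> R * d" using True Rp by (intro mult_left_mono) auto
    finally show ?thesis using What0 Rd by linarith
  next
    case False
    define t' where "t' = t - d"
    have t': "0 \<le> t'" "t' \<le> t" using False d0 unfolding t'_def by auto
    define Js where "Js = {i. real (Suc i) * L \<le> W k t'}"
    have Js_arr: "(k, i) \<in> P \<and> a (k, i) \<le> t'" if "i \<in> Js" for i
      using done_arrived[of "(k, i)" t'] that k t' unfolding Js_def by auto
    have finJ: "finite Js"
    proof (rule finite_subset[OF _ Sset_finite[of k t']])
      show "Js \<subseteq> Sset k t'" using Js_arr by auto
    qed
    have Jeq: "Js = {..<card Js}"
    proof (rule down_closed_eq[OF finJ])
      fix i i' assume "i \<in> Js" "i' < i"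
      then have "real (Suc i') * L \<le> real (Suc i) * L" using L_pos by (intro mult_right_mono) auto
      then show "i' \<in> Js" using \<open>i \<in> Js\<close> unfolding Js_def by auto
    qed
    define j where "j = card Js"
    have jJ: "i \<in> Js \<longleftrightarrow> i < j" for i unfolding j_def by (subst Jeq) simp
    have Wt': "W k t' < real (Suc j) * L" using jJ[of j] unfolding Js_def by auto
    have "\<forall>i. \<exists>h. i < j \<longrightarrow> enat h < nb \<and> (k, i) \<in> S h \<and> e h \<le> t"
    proof (intro allI)
      fix i show "\<exists>h. i < j \<longrightarrow> enat h < nb \<and> (k, i) \<in> S h \<and> e h \<le> t"
      proof (cases "i < j")
        case True
        then have iJ: "i \<in> Js" using jJ by simp
        have dn: "fin_by (k, i) t'" using iJ unfolding Js_def by simp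
        have kP: "(k, i) \<in> P" using Js_arr[OF iJ] by simp
        obtain h where h: "enat h < nb" "(k, i) \<in> S h" using served[OF kP t'(1) dn] by blast
        have "e h \<le> t' + d" using delay[OF kP t'(1) dn h] unfolding d_def by simp
        then show ?thesis using h unfolding t'_def by auto
      qed simp
    qed
    then obtain hh where hh: "\<And>i. i < j \<Longrightarrow> enat (hh i) < nb \<and> (k, i) \<in> S (hh i) \<and> e (hh i) \<le> t"
      by metis
    define Q1 where "Q1 = (\<lambda>i. (hh i, (k, i))) ` {..<j}"
    have full: "tf (hh i) = L" "s (hh i) < t" if "i < j" for i
    proof -
      have h: "enat (hh i) < nb" "e (hh i) \<le> t" using hh[OF that] by auto
      have m: "real (card (S (hh i))) \<ge> 1" using S_card(1)[OF h(1)] by simp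
      have le: "real (card (S (hh i))) * L / R \<le> t - s (hh i)" using h(2) unfolding e_eq by simp
      have "L \<le> (t - s (hh i)) * R / real (card (S (hh i)))"
        by (rule aux_full[OF Rp _ le]) (use m in simp)
      then show "tf (hh i) = L" unfolding tf_def by simp
      have "0 < real (card (S (hh i))) * L / R" using m L_pos Rp by simp
      then show "s (hh i) < t" using le by simp
    qed
    have Q1sub: "Q1 \<subseteq> Qs" unfolding Q1_def Qs_def using hh full(2) by auto
    have injQ: "inj_on (\<lambda>i. (hh i, (k, i))) {..<j}" by (auto simp: inj_on_def)
    have sumQ1: "(\<Sum>x\<in>Q1. tf (fst x)) = real j * L"
      unfolding Q1_def by (simp add: sum.reindex[OF injQ] full(1))
    show ?thesis
    proof (cases "W k t \<le> real (Suc j) * L")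
      case True
      have "real j * L \<le> mpgps_served L N r s S nb k t" using sub_le[OF Q1sub] sumQ1 by simp
      moreover have "L \<le> (2 * real M - 1) * L" using M1 L_pos by simp
      ultimately show ?thesis using True by (simp add: algebra_simps)
    next
      case False
      obtain T where T: "t' \<le> T" "T \<le> t" "W k T = real (Suc j) * L"
        using G.W_ivt[OF k t'(1) t'(2) less_imp_le[OF Wt']] False by auto
      have T0: "0 \<le> T" using T t' by simp
      have dn: "fin_by (k, j) T" using T by simp
      have kP: "(k, j) \<in> P" using done_arrived[of "(k, j)" T] dn k T0 by auto
      obtain hp where hp: "enat hp < nb" "(k, j) \<in> S hp" using served[OF kP T0 dn] by blast
      have ehp: "e hp \<le> T + d" using delay[OF kP T0 dn hp] unfolding d_def by simp
      have m: "1 \<le> real (card (S hp))" using S_card(1)[OF hp(1)] by simp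
      have ehp': "s hp + real (card (S hp)) * L / R \<le> T + d" using ehp unfolding e_eq .
      have WT: "W k t \<le> real (Suc j) * L + R * (t - T)"
        using G.W_bounds[OF k T0 T(2)] T(3) by simp
      have Tt: "t - d \<le> T" using T unfolding t'_def by simp
      show ?thesis
      proof (cases "s hp < t")
        case True
        have inQ: "insert (hp, (k, j)) Q1 \<subseteq> Qs" using Q1sub hp True unfolding Qs_def by auto
        have nin: "(hp, (k, j)) \<notin> Q1" unfolding Q1_def by auto
        have finQ1: "finite Q1" unfolding Q1_def by simp
        have "(\<Sum>x\<in>insert (hp, (k, j)) Q1. tf (fst x)) = tf hp + real j * L"
          using nin finQ1 sumQ1 by simp
        then have "tf hp + real j * L \<le> mpgps_served L N r s S nb k t" using sub_le[OF inQ] by simp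
        moreover have "L + R * (t - T) - tf hp \<le> R * d"
          unfolding tf_def by (rule aux_partial[OF Rp L_pos m Tt T(2) ehp'])
        ultimately show ?thesis using WT Rd by (simp add: algebra_simps)
      next
        case False
        have "real j * L \<le> mpgps_served L N r s S nb k t" using sub_le[OF Q1sub] sumQ1 by simp
        moreover have "L + R * (t - T) \<le> R * d"
          by (rule aux_nopartial[OF Rp L_pos m _ ehp']) (use False in simp)
        ultimately show ?thesis using WT Rd by (simp add: algebra_simps)
      qed
    qed
  qed
qed

end



theorem theorem3:
  fixes K N M :: nat and \<phi> :: "nat \<Rightarrow> real" and r L :: real
    and P :: "(nat \<times> nat) set" and a :: "nat \<times> nat \<Rightarrow> real"
    and W :: "nat \<Rightarrow> real \<Rightarrow> real" and Wt :: "real \<Rightarrow> nat \<Rightarrow> real \<Rightarrow> real"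
    and s :: "nat \<Rightarrow> real" and S :: "nat \<Rightarrow> (nat \<times> nat) set" and nb :: enat
  assumes phi_pos: "\<And>k. k < K \<Longrightarrow> \<phi> k > 0"
    and N_pos: "N \<ge> 1" and r_pos: "r > 0" and L_pos: "L > 0" and M_pos: "M \<ge> 1"
    and P_users: "\<And>k i. (k, i) \<in> P \<Longrightarrow> k < K"
    and P_closed: "\<And>k i j. (k, i) \<in> P \<Longrightarrow> j < i \<Longrightarrow> (k, j) \<in> P"
    and arr_nonneg: "\<And>p. p \<in> P \<Longrightarrow> a p \<ge> 0"
    and arr_mono: "\<And>k i j. (k, i) \<in> P \<Longrightarrow> j \<le> i \<Longrightarrow> a (k, j) \<le> a (k, i)"
    and loc_finite: "\<And>T. finite {p \<in> P. a p \<le> T}"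
    and gps: "is_gps K \<phi> N r (\<lambda>k t. cum_arr P a L k t) W"
    and gps_trunc: "\<And>\<tau>. \<tau> \<ge> 0 \<Longrightarrow> is_gps K \<phi> N r (\<lambda>k t. cum_arr P a L k (min t \<tau>)) (Wt \<tau>)"
    and mpgps: "is_mpgps P a L N r M Wt s S nb"
  shows "\<forall>t\<ge>0. \<forall>k<K. W k t - mpgps_served L N r s S nb k t \<le> (2 * real M - 1) * L"
proof -
  interpret setting K N M \<phi> r L P a W Wt s S nb
    by (rule setting.intro) (fact assms)+
  show ?thesis using lag by blast
qed

end
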